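(* Suppose $\widehat{\mathcal L}^{Y\text{-}A\text{-}B}$-uniform-monotonicity holds for the SCC $F$. Let $(i,\theta)\in\mathcal I\times\Theta$. If $F(\theta)\subseteq\arg\min_{z\in Z^*}u_i^\theta(z)$ and $Z^*\cap\mathcal L_i^Z(F(\theta),\theta)$ is an $i$-$Z^*$-max set, then $\Xi_i(\theta)\ne\emptyset$.
   Context: Standing setup: $\mathcal I=\{1,\dots,I\}$ finite, $I\ge 3$; $\Theta$ finite or countably infinite; $Z$ finite; $Y=\Delta(Z)$; $F:\Theta\to 2^Z\setminus\{\emptyset\}$; $u_i^\theta:Z\to\mathbb R$, $U_i^\theta(y)=\sum_zy_zu_i^\theta(z)$; $\mathcal L_i^Y(\alpha,\theta)=\{y\in Y:U_i^\theta(\alpha)\ge U_i^\theta(y)\}$, $\mathcal L_i^Z(\alpha,\theta)=\{z\in Z:U_i^\theta(\alpha)\ge u_i^\theta(z)\}$, $\mathcal L_i^Z(E,\theta)=\bigcap_{z\in E}\mathcal L_i^Z(z,\theta)$; UNIF$(E)$ is the uniform lottery on $E$. A nonempty $E\subseteq Z$ is an $i$-max set if for some $\theta$, $E\subseteq\arg\max_{z\in E}u_i^\theta(z)$ and $E\subseteq\arg\max_{z\in Z}u_j^\theta(z)$ for all $j\ne i$. $Z^*=\bigcup_\theta F(\theta)$ if $Z$ is an $i$-max set for some $i$, else $Z^*=Z$. A nonempty $E\subseteq Z^*$ is an $i$-$Z^*$-$\theta$-max set if $E\subseteq\arg\max_{z\in E}u_i^\theta(z)$ and $E\subseteq\arg\max_{z\in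 Z^*}u_j^\theta(z)$ for all $j\ne i$; $\Lambda^i(E)=\{\theta:E\text{ is an }i\text{-}Z^*\text{-}\theta\text{-max set}\}$ ($=\emptyset$ for $E=\emptyset$); $E$ is an $i$-$Z^*$-max set if $\Lambda^i(E)\ne\emptyset$. $\Theta_i^\theta=\{\theta':F(\theta)\text{ is an }i\text{-}Z^*\text{-}\theta'\text{-max set and }F(\theta)\subseteq F(\theta')\}$; $\Xi_i(\theta)=\{K\subseteq\Theta_i^\theta,K\ne\emptyset:\Theta_i^\theta\cap\Lambda^i(Z^*\cap\mathcal L_i^Z(F(\theta),\theta)\cap\bigcap_{\theta'\in K}F(\theta'))=K\}$. $\widehat{\mathcal L}_i^{Y\text{-}A\text{-}B}(\mathrm{UNIF}[F(\theta)],\theta)=\Delta[Z^*\cap\mathcal L_i^Z(F(\theta),\theta)\cap\bigcup_{K\in\Xi_i(\theta)}\bigcap_{\theta'\in K}F(\theta')]$ if $F(\theta)\subseteq\arg\min_{z\in Z^*}u_i^\theta(z)$, $\Xi_i(\theta)\ne\emptyset$ and $Z^*\cap\mathcal L_i^Z(F(\theta),\theta)$ is an $i$-$Z^*$-max set; otherwise $\Delta(Z^* )\cap\mathcal L_i^Y(\mathrm{UNIF}[F(\theta)],\theta)$. $\widehat{\mathcal L}^{Y\text{-}A\text{-}B}$-uniform-monotonicity: for all $\theta,\theta'$, [$\widehat{\mathcal L}_i^{Y\text{-}A\text{-}B}(\mathrm{UNIF}[F(\theta)],\theta)\subseteq\mathcal L_i^Y(\mathrm{UNIF}[F(\theta)],\theta')$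 for all $i$] implies $F(\theta)\subseteq F(\theta')$. *)

theory Defs
  imports Complex_Main "HOL-Library.Countable"
begin

text \<open>Agents: type 'i (finite); states: type 'th (countable); outcomes: type 'z (finite).
  u i th z is the utility of agent i at state th for outcome z; F is the SCC.
  Lotteries are functions 'z => real.\<close>

definition lotteries_on :: "'z::finite set \<Rightarrow> ('z \<Rightarrow> real) set" where
  "lotteries_on S = {y. (\<forall>z. 0 \<le> y z) \<and> (\<Sum>z\<in>UNIV. y z) = 1 \<and> (\<forall>z. z \<notin> S \<longrightarrow> y z = 0)}"

abbreviation lotteries :: "('z::finite \<Rightarrow> real) set" where
  "lotteries \<equiv> lotteries_on UNIV"

definition unif :: "'z::finite set \<Rightarrow> 'z \<Rightarrow> real" where
  "unif E = (\<lambda>z. if z \<in> E then 1 / real (card E) else 0)"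

definition EU :: "('i \<Rightarrow> 'th \<Rightarrow> 'z \<Rightarrow> real) \<Rightarrow> 'i \<Rightarrow> 'th \<Rightarrow> ('z::finite \<Rightarrow> real) \<Rightarrow> real" where
  "EU u i th y = (\<Sum>z\<in>UNIV. y z * u i th z)"

definition LY :: "('i \<Rightarrow> 'th \<Rightarrow> 'z \<Rightarrow> real) \<Rightarrow> 'i \<Rightarrow> ('z::finite \<Rightarrow> real) \<Rightarrow> 'th \<Rightarrow> ('z \<Rightarrow> real) set" where
  "LY u i \<alpha> th = {y \<in> lotteries. EU u i th \<alpha> \<ge> EU u i th y}"

definition LZset :: "('i \<Rightarrow> 'th \<Rightarrow> 'z \<Rightarrow> real) \<Rightarrow> 'i \<Rightarrow> 'z set \<Rightarrow> 'th \<Rightarrow> 'z set" where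
  "LZset u i E th = {z'. \<forall>z\<in>E. u i th z \<ge> u i th z'}"

definition argmax_on :: "('z \<Rightarrow> real) \<Rightarrow> 'z set \<Rightarrow> 'z set" where
  "argmax_on f S = {z \<in> S. \<forall>z'\<in>S. f z' \<le> f z}"

definition argmin_on :: "('z \<Rightarrow> real) \<Rightarrow> 'z set \<Rightarrow> 'z set" where
  "argmin_on f S = {z \<in> S. \<forall>z'\<in>S. f z \<le> f z'}"

definition is_imax_set :: "('i \<Rightarrow> 'th \<Rightarrow> 'z \<Rightarrow> real) \<Rightarrow> 'i \<Rightarrow> 'z set \<Rightarrow> bool" where
  "is_imax_set u i E \<longleftrightarrow> E \<noteq> {} \<and> (\<exists>th. E \<subseteq> argmax_on (u i th) E \<and>
       (\<forall>j. j \<noteq> i \<longrightarrow> E \<subseteq> argmax_on (u j th) UNIV))"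

definition Zstar :: "('i \<Rightarrow> 'th \<Rightarrow> 'z \<Rightarrow> real) \<Rightarrow> ('th \<Rightarrow> 'z set) \<Rightarrow> 'z set" where
  "Zstar u F = (if \<exists>i. is_imax_set u i UNIV then (\<Union>th. F th) else UNIV)"

definition is_iZth_max :: "('i \<Rightarrow> 'th \<Rightarrow> 'z \<Rightarrow> real) \<Rightarrow> ('th \<Rightarrow> 'z set) \<Rightarrow> 'i \<Rightarrow> 'z set \<Rightarrow> 'th \<Rightarrow> bool" where
  "is_iZth_max u F i E th \<longleftrightarrow> E \<noteq> {} \<and> E \<subseteq> Zstar u F \<and> E \<subseteq> argmax_on (u i th) E \<and>
       (\<forall>j. j \<noteq> i \<longrightarrow> E \<subseteq> argmax_on (u j th) (Zstar u F))"

definition Lambda :: "('i \<Rightarrow> 'th \<Rightarrow> 'z \<Rightarrow> real) \<Rightarrow> ('th \<Rightarrow> 'z set) \<Rightarrow> 'i \<Rightarrow> 'z set \<Rightarrow> 'th set" where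
  "Lambda u F i E = {th. is_iZth_max u F i E th}"

definition is_iZ_max :: "('i \<Rightarrow> 'th \<Rightarrow> 'z \<Rightarrow> real) \<Rightarrow> ('th \<Rightarrow> 'z set) \<Rightarrow> 'i \<Rightarrow> 'z set \<Rightarrow> bool" where
  "is_iZ_max u F i E \<longleftrightarrow> Lambda u F i E \<noteq> {}"

definition Theta_i :: "('i \<Rightarrow> 'th \<Rightarrow> 'z \<Rightarrow> real) \<Rightarrow> ('th \<Rightarrow> 'z set) \<Rightarrow> 'i \<Rightarrow> 'th \<Rightarrow> 'th set" where
  "Theta_i u F i th = {th'. is_iZth_max u F i (F th) th' \<and> F th \<subseteq> F th'}"

definition Xi :: "('i \<Rightarrow> 'th \<Rightarrow> 'z \<Rightarrow> real) \<Rightarrow> ('th \<Rightarrow> 'z set) \<Rightarrow> 'i \<Rightarrow> 'th \<Rightarrow> 'th set set" where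
  "Xi u F i th = {K. K \<subseteq> Theta_i u F i th \<and> K \<noteq> {} \<and>
      Theta_i u F i th \<inter> Lambda u F i (Zstar u F \<inter> LZset u i (F th) th \<inter> (\<Inter>th'\<in>K. F th')) = K}"

definition Lhat :: "('i \<Rightarrow> 'th \<Rightarrow> 'z::finite \<Rightarrow> real) \<Rightarrow> ('th \<Rightarrow> 'z set) \<Rightarrow> 'i \<Rightarrow> 'th \<Rightarrow> ('z \<Rightarrow> real) set" where
  "Lhat u F i th =
     (if F th \<subseteq> argmin_on (u i th) (Zstar u F) \<and> Xi u F i th \<noteq> {} \<and>
         is_iZ_max u F i (Zstar u F \<inter> LZset u i (F th) th)
      then lotteries_on (Zstar u F \<inter> LZset u i (F th) th \<inter> (\<Union>K\<in>Xi u F i th. \<Inter>th'\<in>K. F th'))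
      else lotteries_on (Zstar u F) \<inter> LY u i (unif (F th)) th)"

definition Lhat_uniform_monotonic :: "('i \<Rightarrow> 'th \<Rightarrow> 'z::finite \<Rightarrow> real) \<Rightarrow> ('th \<Rightarrow> 'z set) \<Rightarrow> bool" where
  "Lhat_uniform_monotonic u F \<longleftrightarrow> (\<forall>th th'.
      (\<forall>i. Lhat u F i th \<subseteq> LY u i (unif (F th)) th') \<longrightarrow> F th \<subseteq> F th')"

end

theory Submission
  imports Defs
begin

lemma lot_sum_le:
  fixes y :: "'z::finite \<Rightarrow> real"
  assumes "y \<in> lotteries_on A" "\<forall>z\<in>A. f z \<le> c"
  shows "(\<Sum>z\<in>UNIV. y z * f z) \<le> c"
proof -
  have "(\<Sum>z\<in>UNIV. y z * f z) \<le> (\<Sum>z\<in>UNIV. y z * c)"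
  proof (rule sum_mono)
    fix z :: 'z
    show "y z * f z \<le> y z * c"
      using assms unfolding lotteries_on_def
      by (cases "z \<in> A") (auto intro: mult_left_mono)
  qed
  also have "\<dots> = c" using assms(1) unfolding lotteries_on_def
    by (simp add: sum_distrib_right[symmetric])
  finally show ?thesis .
qed

lemma lot_sum_eq:
  fixes y :: "'z::finite \<Rightarrow> real"
  assumes "y \<in> lotteries_on A" "\<forall>z\<in>A. f z = c"
  shows "(\<Sum>z\<in>UNIV. y z * f z) = c"
proof -
  have "(\<Sum>z\<in>UNIV. y z * f z) = (\<Sum>z\<in>UNIV. y z * c)"
  proof (rule sum.cong)
    fix z :: 'z
    show "y z * f z = y z * c"
      using assms unfolding lotteries_on_def
      by (cases "z \<in> A") auto
  qed simp
  also have "\<dots> = c" using assms(1) unfolding lotteries_on_def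
    by (simp add: sum_distrib_right[symmetric])
  finally show ?thesis .
qed

lemma unif_lot:
  fixes E :: "'z::finite set"
  assumes "E \<noteq> {}"
  shows "unif E \<in> lotteries_on E"
proof -
  have fin: "finite E" by simp
  have "(\<Sum>z\<in>UNIV. unif E z) = (\<Sum>z\<in>E. 1 / real (card E))"
    unfolding unif_def using sum.inter_restrict[of UNIV "\<lambda>_. 1 / real (card E)" E]
    by simp
  also have "\<dots> = 1" using assms fin by simp
  finally show ?thesis unfolding lotteries_on_def unif_def by auto
qed

lemma lot_support:
  fixes y :: "'z::finite \<Rightarrow> real"
  assumes "y \<in> lotteries_on A" "\<forall>z\<in>A. m \<le> f z" "(\<Sum>z\<in>UNIV. y z * f z) \<le> m"
  shows "y \<in> lotteries_on {z\<in>A. f z \<le> m}"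
proof -
  have y: "\<forall>z. 0 \<le> y z" "(\<Sum>z\<in>UNIV. y z) = 1" "\<forall>z. z \<notin> A \<longrightarrow> y z = 0"
    using assms(1) unfolding lotteries_on_def by auto
  have nn: "\<forall>z\<in>UNIV. 0 \<le> y z * (f z - m)"
  proof
    fix z :: 'z
    show "0 \<le> y z * (f z - m)" using y assms(2) by (cases "z \<in> A") auto
  qed
  have "(\<Sum>z\<in>UNIV. y z * (f z - m)) = (\<Sum>z\<in>UNIV. y z * f z) - (\<Sum>z\<in>UNIV. y z) * m"
    by (simp add: algebra_simps sum_subtractf sum_distrib_right sum_distrib_left)
  also have "\<dots> \<le> 0" using assms(3) y(2) by simp
  moreover have "0 \<le> (\<Sum>z\<in>UNIV. y z * (f z - m))"
    by (rule sum_nonneg) (use nn in auto)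
  ultimately have "(\<Sum>z\<in>UNIV. y z * (f z - m)) = 0" by linarith
  then have z: "\<forall>z. y z * (f z - m) = 0"
    using sum_nonneg_eq_0_iff[of UNIV "\<lambda>z. y z * (f z - m)"] nn by simp
  show ?thesis unfolding lotteries_on_def
  proof (intro CollectI conjI allI impI)
    fix z assume "z \<notin> {z \<in> A. f z \<le> m}"
    then show "y z = 0" using z[rule_format, of z] y(3) by auto
  qed (use y in auto)
qed

lemma lotteries_on_mono: "A \<subseteq> B \<Longrightarrow> lotteries_on A \<subseteq> lotteries_on B"
  unfolding lotteries_on_def by auto

lemma imax_subset:
  assumes "is_iZth_max u F i S t" "T \<subseteq> S" "T \<noteq> {}"
  shows "is_iZth_max u F i T t"
  using assms unfolding is_iZth_max_def argmax_on_def by blast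

theorem lemma10:
  fixes u :: "'i::finite \<Rightarrow> 'th::countable \<Rightarrow> 'z::finite \<Rightarrow> real"
    and F :: "'th \<Rightarrow> 'z set" and i :: 'i and th :: 'th
  assumes "card (UNIV :: 'i set) \<ge> 3"
    and "\<And>t. F t \<noteq> {}"
    and "Lhat_uniform_monotonic u F"
    and "F th \<subseteq> argmin_on (u i th) (Zstar u F)"
    and "is_iZ_max u F i (Zstar u F \<inter> LZset u i (F th) th)"
  shows "Xi u F i th \<noteq> {}"
proof (rule ccontr)
  assume XE: "\<not> Xi u F i th \<noteq> {}"
  define ZS where "ZS = Zstar u F"
  define S where "S = ZS \<inter> LZset u i (F th) th"
  obtain z0 where z0: "z0 \<in> F th" using assms(2) by blast
  define m where "m = u i th z0"
  have FZS: "F th \<subseteq> ZS" using assms(4) unfolding ZS_def argmin_on_def by auto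
  have Fm: "\<forall>z\<in>F th. u i th z = m"
  proof
    fix z assume zF: "z \<in> F th"
    have "u i th z \<le> u i th z0" "u i th z0 \<le> u i th z"
      using assms(4) z0 zF FZS unfolding ZS_def argmin_on_def by blast+
    then show "u i th z = m" unfolding m_def by simp
  qed
  have minZ: "\<forall>z\<in>ZS. m \<le> u i th z"
    using assms(4) z0 unfolding m_def ZS_def argmin_on_def by auto
  have Sdef: "S = {z\<in>ZS. u i th z \<le> m}"
    using Fm z0 unfolding S_def LZset_def by auto
  have FS: "F th \<subseteq> S" using FZS Fm Sdef by auto
  have K0ne: "Lambda u F i S \<noteq> {}" using assms(5) unfolding is_iZ_max_def S_def ZS_def .
  have LamTheta: "Lambda u F i S \<subseteq> Theta_i u F i th"
  proof
    fix t assume tL: "t \<in> Lambda u F i S"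
    then have tm: "is_iZth_max u F i S t" unfolding Lambda_def by simp
    then have Sne: "S \<noteq> {}" and SZ: "S \<subseteq> ZS"
      and Si: "\<forall>z\<in>S. \<forall>z'\<in>S. u i t z' \<le> u i t z"
      and Sj: "\<forall>j. j \<noteq> i \<longrightarrow> (\<forall>z\<in>S. \<forall>z'\<in>ZS. u j t z' \<le> u j t z)"
      unfolding is_iZth_max_def argmax_on_def ZS_def by blast+
    have z0S: "z0 \<in> S" using FS z0 by blast
    have Sc: "\<forall>z\<in>S. u i t z = u i t z0"
    proof
      fix z assume "z \<in> S"
      then have "u i t z \<le> u i t z0" "u i t z0 \<le> u i t z" using Si z0S by blast+
      then show "u i t z = u i t z0" by simp
    qed
    have Sjc: "\<And>j. j \<noteq> i \<Longrightarrow> (\<forall>z\<in>F th. u j t z = u j t z0) \<and> (\<forall>z\<in>ZS. u j t z \<le> u j t z0)"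
    proof -
      fix j assume ji: "j \<noteq> i"
      have a: "\<forall>z\<in>S. \<forall>z'\<in>ZS. u j t z' \<le> u j t z" using Sj ji by blast
      show "(\<forall>z\<in>F th. u j t z = u j t z0) \<and> (\<forall>z\<in>ZS. u j t z \<le> u j t z0)"
      proof (intro conjI ballI)
        fix z assume zF: "z \<in> F th"
        then have "z \<in> S" "z \<in> ZS" using FS SZ by blast+
        then have "u j t z \<le> u j t z0" "u j t z0 \<le> u j t z" using a z0S SZ by blast+
        then show "u j t z = u j t z0" by simp
      next
        fix z assume "z \<in> ZS" then show "u j t z \<le> u j t z0" using a z0S by blast
      qed
    qed
    have uF: "unif (F th) \<in> lotteries_on (F th)" using unif_lot assms(2) by blast
    have "\<forall>j. Lhat u F j th \<subseteq> LY u j (unif (F th)) t"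
    proof
      fix j
      show "Lhat u F j th \<subseteq> LY u j (unif (F th)) t"
      proof (cases "j = i")
        case True
        have Lh: "Lhat u F i th = lotteries_on ZS \<inter> LY u i (unif (F th)) th"
          using XE unfolding Lhat_def ZS_def by auto
        show ?thesis unfolding True Lh
        proof
          fix y assume y: "y \<in> lotteries_on ZS \<inter> LY u i (unif (F th)) th"
          have eu: "EU u i th (unif (F th)) = m"
            unfolding EU_def using lot_sum_eq[OF uF] Fm by blast
          have "y \<in> lotteries_on S"
            unfolding Sdef
            by (rule lot_support) (use y minZ eu in \<open>auto simp: LY_def EU_def\<close>)
          moreover have "y \<in> lotteries" using y unfolding LY_def by auto
          moreover have "EU u i t (unif (F th)) = u i t z0"
            unfolding EU_def using lot_sum_eq[OF uF] Sc FS by blast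
          moreover have "\<And>y. y \<in> lotteries_on S \<Longrightarrow> EU u i t y = u i t z0"
            unfolding EU_def using lot_sum_eq Sc by blast
          ultimately show "y \<in> LY u i (unif (F th)) t" unfolding LY_def by auto
        qed
      next
        case False
        have sub: "Lhat u F j th \<subseteq> lotteries_on ZS"
          unfolding Lhat_def ZS_def
          using lotteries_on_mono[of "Zstar u F \<inter> LZset u j (F th) th \<inter> (\<Union>K\<in>Xi u F j th. \<Inter>th'\<in>K. F th')" "Zstar u F"]
          by auto
        show ?thesis
        proof
          fix y assume "y \<in> Lhat u F j th"
          then have y: "y \<in> lotteries_on ZS" using sub by blast
          have "EU u j t (unif (F th)) = u j t z0"
            unfolding EU_def using lot_sum_eq[OF uF] Sjc[OF False] by blast
          moreover have "EU u j t y \<le> u j t z0"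
            unfolding EU_def using lot_sum_le[OF y] Sjc[OF False] by blast
          moreover have "y \<in> lotteries" using y lotteries_on_mono by blast
          ultimately show "y \<in> LY u j (unif (F th)) t" unfolding LY_def by auto
        qed
      qed
    qed
    then have "F th \<subseteq> F t" using assms(3) unfolding Lhat_uniform_monotonic_def by blast
    moreover have "is_iZth_max u F i (F th) t" using imax_subset[OF tm FS assms(2)] .
    ultimately show "t \<in> Theta_i u F i th" unfolding Theta_i_def by simp
  qed
  define Th where "Th = Theta_i u F i th"
  define T where "T = (\<lambda>K. S \<inter> (\<Inter>t\<in>K. F t))"
  define f where "f = (\<lambda>K. Th \<inter> Lambda u F i (T K))"
  have Xi_eq: "\<And>K. K \<in> Xi u F i th \<longleftrightarrow> K \<subseteq> Th \<and> K \<noteq> {} \<and> f K = K"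
    unfolding Xi_def f_def T_def Th_def S_def ZS_def by auto
  have FT: "\<And>K. K \<subseteq> Th \<Longrightarrow> F th \<subseteq> T K"
    unfolding T_def Th_def Theta_i_def using FS by auto
  have fmono: "\<And>K1 K2. K1 \<subseteq> K2 \<Longrightarrow> K2 \<subseteq> Th \<Longrightarrow> f K1 \<subseteq> f K2"
  proof -
    fix K1 K2 :: "'th set" assume k12: "K1 \<subseteq> K2" and k2: "K2 \<subseteq> Th"
    have "T K2 \<subseteq> T K1" using k12 unfolding T_def by auto
    moreover have "T K2 \<noteq> {}"
    proof -
      have "F th \<subseteq> T K2" using FT[OF k2] .
      then show ?thesis using assms(2)[of th] by auto
    qed
    ultimately have "T K2 \<subseteq> T K1" "T K2 \<noteq> {}" by auto
    then show "f K1 \<subseteq> f K2" unfolding f_def Lambda_def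
      using imax_subset[of u F i "T K1" _ "T K2"] by auto
  qed
  define K0 where "K0 = Lambda u F i S"
  define P where "P = (\<lambda>K. K0 \<subseteq> K \<and> K \<subseteq> Th \<and> K \<subseteq> f K)"
  have PK0: "P K0"
  proof -
    have "K0 \<subseteq> Lambda u F i (T K0)"
    proof
      fix t assume "t \<in> K0"
      then have tm: "is_iZth_max u F i S t" unfolding K0_def Lambda_def by simp
      have "T K0 \<subseteq> S" unfolding T_def by blast
      moreover have "T K0 \<noteq> {}" using FT[of K0] assms(2)[of th] LamTheta
        unfolding K0_def Th_def by blast
      ultimately show "t \<in> Lambda u F i (T K0)"
        using imax_subset[OF tm] unfolding Lambda_def by simp
    qed
    then show ?thesis unfolding P_def f_def using LamTheta K0_def Th_def by auto
  qed
  obtain K where PK: "P K" and minK: "\<And>K'. P K' \<Longrightarrow> card (T K) \<le> card (T K')"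
    using ex_has_least_nat[of P K0 "\<lambda>K. card (T K)"] PK0 by blast
  define K' where "K' = f K"
  have fTh: "\<And>K. f K \<subseteq> Th" unfolding f_def by auto
  have PK': "P K'"
    using PK fmono[of K K'] fTh unfolding P_def K'_def by blast
  have "K \<subseteq> K'" using PK unfolding P_def K'_def by blast
  then have sub: "T K' \<subseteq> T K" unfolding T_def by auto
  have "card (T K) \<le> card (T K')" using minK[OF PK'] .
  then have "T K' = T K" using sub card_subset_eq[of "T K" "T K'"] by (simp add: antisym card_mono)
  then have fix': "f K' = K'" unfolding f_def K'_def by simp
  have "K' \<noteq> {}" using PK' K0ne unfolding P_def K0_def by blast
  then have "K' \<in> Xi u F i th" using Xi_eq fix' fTh K'_def by auto
  then show False using XE by blast
qed

end
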